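(* Fix positive numbers $l^0_{ij},l^0_{jk},l^0_{ki}$ and let $W^\diamond=\{(w_i,w_j,w_k)\in\mathbb{R}^3: w_r+w_s>-\ln\cosh\frac{l^0_{rs}}{2}\text{ for all }\{r,s\}\subset\{i,j,k\}\}$. For $(w_i,w_j,w_k)\in W^\diamond$ define $l_{ij},l_{jk},l_{ki}>0$ by $\cosh\frac{l_{rs}}{2}=e^{w_r+w_s}\cosh\frac{l^0_{rs}}{2}$, and let $\theta_i,\theta_j,\theta_k$ be the lengths of the sides opposite to the sides of lengths $l_{jk},l_{ki},l_{ij}$, respectively, in the right-angled hyperbolic hexagon whose three pairwise non-adjacent sides have lengths $l_{ij},l_{jk},l_{ki}$. Then the Jacobian matrix $\frac{\partial(\theta_i,\theta_j,\theta_k)}{\partial(w_i,w_j,w_k)}$ is symmetric, strictly diagonally dominant (i.e. for each row $r$, $|\partial\theta_r/\partial w_r|>\sum_{s\ne r}|\partial\theta_r/\partial w_s|$), and negative definite on $W^\diamond$.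
   Context: In a right-angled hyperbolic hexagon with pairwise non-adjacent sides of lengths $l_{ij},l_{jk},l_{ki}$, the opposite side lengths satisfy the cosine law $\cosh\theta_i=\frac{\cosh l_{jk}+\cosh l_{ki}\cosh l_{ij}}{\sinh l_{ki}\sinh l_{ij}}$ (and cyclically), and the sine law $\frac{\sinh\theta_i}{\sinh l_{jk}}=\frac{\sinh\theta_j}{\sinh l_{ki}}=\frac{\sinh\theta_k}{\sinh l_{ij}}$. *)

theory Defs
  imports "HOL-Analysis.Analysis"
begin

text \<open>Indices i, j, k are represented by the elements 1, 2, 3 of the type 3.
  Coordinates: w = (w_i, w_j, w_k) = (w$1, w$2, w$3).\<close>

text \<open>Length of the side opposite to the side of length a in the right-angled
  hyperbolic hexagon whose pairwise non-adjacent sides have lengths a, b, c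
  (cosine law).\<close>
definition hex_opp :: "real \<Rightarrow> real \<Rightarrow> real \<Rightarrow> real" where
  "hex_opp a b c = arcosh ((cosh a + cosh b * cosh c) / (sinh b * sinh c))"

definition edge_len :: "real \<Rightarrow> real \<Rightarrow> real \<Rightarrow> real" where
  "edge_len l0 x y = 2 * arcosh (exp (x + y) * cosh (l0 / 2))"

definition W_dia :: "real \<Rightarrow> real \<Rightarrow> real \<Rightarrow> (real ^ 3) set" where
  "W_dia l0ij l0jk l0ki = {w.
      w$1 + w$2 > - ln (cosh (l0ij / 2)) \<and>
      w$2 + w$3 > - ln (cosh (l0jk / 2)) \<and>
      w$3 + w$1 > - ln (cosh (l0ki / 2))}"

definition theta_map :: "real \<Rightarrow> real \<Rightarrow> real \<Rightarrow> real ^ 3 \<Rightarrow> real ^ 3" where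
  "theta_map l0ij l0jk l0ki w =
     (let lij = edge_len l0ij (w$1) (w$2);
          ljk = edge_len l0jk (w$2) (w$3);
          lki = edge_len l0ki (w$3) (w$1)
      in (\<chi> r. if r = 1 then hex_opp ljk lki lij
               else if r = 2 then hex_opp lki lij ljk
               else hex_opp lij ljk lki))"

end

theory Submission imports Defs begin

lemma edge_facts:
  fixes y :: real assumes "y > 1"
  shows "sinh (2 * arcosh y) / (cosh (2 * arcosh y) - 1) = y / sqrt (y^2 - 1)"
        "2 * arcosh y > 0"
proof -
  have s: "sinh (arcosh y) = sqrt (y^2-1)" using assms by (simp add: sinh_arcosh_real)
  have c: "cosh (arcosh y) = y" using assms by simp
  have y2: "y^2 > 1" using assms by (simp add: one_less_power)
  have p: "sqrt (y^2-1) > 0" using y2 by simp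
  have "sinh (2 * arcosh y) / (cosh (2 * arcosh y) - 1) = 2 * sqrt (y^2-1) * y / (2 * y^2 - 2)"
    by (simp add: sinh_double cosh_double_cosh s c)
  also have "\<dots> = y / sqrt (y^2 - 1)" using p
    proof -
    have "(sqrt (y^2-1))^2 = y^2 - 1" using y2 by simp
    then show ?thesis using p by (simp add: field_simps power2_eq_square)
  qed
  finally show "sinh (2 * arcosh y) / (cosh (2 * arcosh y) - 1) = y / sqrt (y^2 - 1)" .
  show "2 * arcosh y > 0" using assms by simp
qed

lemma edge_deriv:
  fixes w :: "real^3"
  assumes "exp (w$p + w$q) * cosh (l0/2) > 1"
  shows "((\<lambda>x. edge_len l0 (x$p) (x$q)) has_derivative
     (\<lambda>h. (2 * sinh (edge_len l0 (w$p) (w$q)) / (cosh (edge_len l0 (w$p) (w$q)) - 1)) * (h$p + h$q))) (at w)"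
proof -
  define y where "y = exp (w$p + w$q) * cosh (l0/2)"
  have y1: "y > 1" using assms y_def by simp
  have e: "edge_len l0 (w$p) (w$q) = 2 * arcosh y" by (simp add: edge_len_def y_def)
  have d: "(arcosh has_derivative (*) (1 / sqrt (y^2 - 1))) (at y)"
    using arcosh_real_has_field_derivative[OF y1, of UNIV] unfolding has_field_derivative_def by simp
  have g: "((\<lambda>x. exp (x$p + x$q) * cosh (l0/2)) has_derivative (\<lambda>h. exp (w$p + w$q) * (h$p + h$q) * cosh (l0/2))) (at w)"
    by (auto intro!: derivative_eq_intros bounded_linear.has_derivative[OF bounded_linear_vec_nth] simp: algebra_simps)
  have D: "((\<lambda>x. 2 * arcosh (exp (x$p + x$q) * cosh (l0/2))) has_derivative
     (\<lambda>h. 2 * ((1 / sqrt (y^2 - 1)) * (exp (w$p + w$q) * (h$p + h$q) * cosh (l0/2))))) (at w)"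
    apply (rule has_derivative_mult_right)
    using has_derivative_compose[OF g d[unfolded y_def]] by (simp add: y_def)
  have L: "2 * sinh (edge_len l0 (w$p) (w$q)) / (cosh (edge_len l0 (w$p) (w$q)) - 1) = 2 * (y / sqrt (y^2 - 1))"
    using e edge_facts(1)[OF y1] by simp
  have fe: "(\<lambda>x. edge_len l0 (x$p) (x$q)) = (\<lambda>x. 2 * arcosh (exp (x$p + x$q) * cosh (l0/2)))"
    by (simp add: edge_len_def fun_eq_iff)
  show ?thesis unfolding L fe
    by (rule has_derivative_eq_rhs[OF D]) (simp add: fun_eq_iff y_def)
qed

lemma cosh_comp:
  fixes f :: "real^3 \<Rightarrow> real"
  assumes "(f has_derivative f') (at w)"
  shows "((\<lambda>x. cosh (f x)) has_derivative (\<lambda>h. sinh (f w) * f' h)) (at w)"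
proof -
  have "(cosh has_derivative (\<lambda>h. sinh (f w) * h)) (at (f w))"
    using has_derivative_cosh[of "\<lambda>x. x" 1 "f w" UNIV] by simp
  from has_derivative_compose[OF assms this] show ?thesis by simp
qed

lemma sinh_comp:
  fixes f :: "real^3 \<Rightarrow> real"
  assumes "(f has_derivative f') (at w)"
  shows "((\<lambda>x. sinh (f x)) has_derivative (\<lambda>h. cosh (f w) * f' h)) (at w)"
proof -
  have "(sinh has_derivative (\<lambda>h. cosh (f w) * h)) (at (f w))"
    using has_derivative_sinh[of "\<lambda>x. x" 1 "f w" UNIV] by simp
  from has_derivative_compose[OF assms this] show ?thesis by simp
qed

definition Dl :: "real \<Rightarrow> real \<Rightarrow> real \<Rightarrow> real" where
  "Dl x y z = x^2 + y^2 + z^2 + 2*x*y*z - 1"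

lemma alg1:
  fixes x y z u v :: real
  assumes "u > 0" "v > 0" "u^2 = y^2 - 1" "v^2 = z^2 - 1"
  shows "((x + y * z)/(u * v))^2 - 1 = Dl x y z / (u * v)^2"
proof -
  have "(x + y * z)^2 - (u * v)^2 = Dl x y z" unfolding Dl_def power_mult_distrib assms(3,4)
    by algebra
  then show ?thesis using assms(1,2) by (simp add: field_simps)
qed

lemma alg2:
  fixes x y z u v t r A B C :: real
  assumes "u > 0" "v > 0" "r > 0" "u^2 = y^2 - 1" "v^2 = z^2 - 1"
  shows "(1 / (r / (u * v))) * (((t * A + (y * (v * C) + u * B * z)) * (u * v) - (x+y * z) * (u * (z * C)+y * B * v))/(u * v * (u * v)))
      = (t * A - (z + x * y)/u * B - (y + x * z)/v * C)/r"
proof -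
  have e: "u * u = y * y - 1" "v * v = z * z - 1" using assms(4,5) by (simp_all add: power2_eq_square)
  show ?thesis using assms(1,2,3) apply (simp add: field_simps)
    using e by algebra
qed

lemma hex_deriv:
  fixes fa fb fc :: "real^3 \<Rightarrow> real"
  assumes da: "(fa has_derivative fa') (at w)" and db: "(fb has_derivative fb') (at w)"
    and dc: "(fc has_derivative fc') (at w)"
    and pa: "fa w > 0" and pb: "fb w > 0" and pc: "fc w > 0"
  shows "((\<lambda>x. hex_opp (fa x) (fb x) (fc x)) has_derivative
     (\<lambda>h. (sinh (fa w) * fa' h - (cosh (fc w) + cosh (fa w) * cosh (fb w)) / sinh (fb w) * fb' h
        - (cosh (fb w) + cosh (fa w) * cosh (fc w)) / sinh (fc w) * fc' h)
        / sqrt (Dl (cosh (fa w)) (cosh (fb w)) (cosh (fc w))))) (at w)"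
proof -
  define a where "a = fa w"
  define b where "b = fb w"
  define c where "c = fc w"
  define q where "q = (cosh a + cosh b * cosh c) / (sinh b * sinh c)"
  have sb: "sinh b > 0" and sc: "sinh c > 0" using pb pc a_def b_def c_def by auto
  have ca: "cosh a > 1" using pa a_def by (smt (verit) cosh_real_nonneg_less_iff cosh_0)
  have "cosh b * cosh c - sinh b * sinh c \<ge> 1" using cosh_diff[of b c] cosh_real_ge_1[of "b-c"] by simp
  hence "cosh a + cosh b * cosh c > sinh b * sinh c" using ca by linarith
  hence q1: "q > 1" unfolding q_def using sb sc by (simp add: less_divide_eq)
  have Q: "((\<lambda>x. (cosh (fa x) + cosh (fb x) * cosh (fc x)) / (sinh (fb x) * sinh (fc x))) has_derivative
     (\<lambda>h. ((sinh a * fa' h + (cosh b * (sinh c * fc' h) + sinh b * fb' h * cosh c)) * (sinh b * sinh c)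
         - (cosh a + cosh b * cosh c) * (sinh b * (cosh c * fc' h) + cosh b * fb' h * sinh c)) / (sinh b * sinh c * (sinh b * sinh c)))) (at w)"
    apply (rule has_derivative_eq_rhs)
     apply (use sb sc in \<open>auto intro!: derivative_eq_intros cosh_comp sinh_comp da db dc simp: a_def b_def c_def\<close>)[1]
    by (simp add: a_def b_def c_def)
  have qe: "(cosh (fa w) + cosh (fb w) * cosh (fc w)) / (sinh (fb w) * sinh (fc w)) = q"
    by (simp add: q_def a_def b_def c_def)
  have A: "(arcosh has_derivative (*) (1 / sqrt (q^2 - 1))) (at ((cosh (fa w) + cosh (fb w) * cosh (fc w)) / (sinh (fb w) * sinh (fc w))))"
    unfolding qe using arcosh_real_has_field_derivative[OF q1, of UNIV] unfolding has_field_derivative_def by simp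
  have u2: "sinh b ^ 2 = cosh b ^ 2 - 1" "sinh c ^ 2 = cosh c ^ 2 - 1" by (simp_all add: sinh_square_eq)
  have Dq: "q^2 - 1 = Dl (cosh a) (cosh b) (cosh c) / (sinh b * sinh c)^2"
    unfolding q_def by (rule alg1[OF sb sc u2])
  have Dpos: "Dl (cosh a) (cosh b) (cosh c) > 0"
  proof -
    have "q^2 - 1 > 0" using q1 by (simp add: one_less_power)
    then show ?thesis unfolding Dq using sb sc by (simp add: zero_less_divide_iff)
  qed
  have sq: "sqrt (q^2 - 1) = sqrt (Dl (cosh a) (cosh b) (cosh c)) / (sinh b * sinh c)"
    unfolding Dq using sb sc by (simp add: real_sqrt_divide)
  have H: "((\<lambda>x. hex_opp (fa x) (fb x) (fc x)) has_derivative
     (\<lambda>h. (1 / sqrt (q^2 - 1)) * (((sinh a * fa' h + (cosh b * (sinh c * fc' h) + sinh b * fb' h * cosh c)) * (sinh b * sinh c)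
         - (cosh a + cosh b * cosh c) * (sinh b * (cosh c * fc' h) + cosh b * fb' h * sinh c)) / (sinh b * sinh c * (sinh b * sinh c))))) (at w)"
    unfolding hex_opp_def using has_derivative_compose[OF Q A] by simp
  show ?thesis
    apply (rule has_derivative_eq_rhs[OF H])
    unfolding sq fun_eq_iff
    apply (intro allI)
    apply (subst alg2[OF sb sc _ u2])
    using Dpos by (simp_all add: a_def b_def c_def)
qed

definition dg :: "real \<Rightarrow> real \<Rightarrow> real \<Rightarrow> real \<Rightarrow> real" where
  "dg K x y z = - K * ((z + x * y) / (y - 1) + (y + x * z) / (z - 1))"
definition ofd :: "real \<Rightarrow> real \<Rightarrow> real \<Rightarrow> real \<Rightarrow> real" where
  "ofd K x y z = K * (x - y - z - 1) / (x - 1)"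

lemma ofd_sym: "ofd K x y z = ofd K x z y"
  unfolding ofd_def by (simp add: algebra_simps)

lemma Dl_perm: "Dl y z x = Dl x y z"
  unfolding Dl_def by (simp add: algebra_simps)

lemma comp_alg:
  fixes xa xb xc ua ub uc r p q s :: real
  assumes "ua > 0" "ub > 0" "uc > 0" "ua^2 = xa^2 - 1" "ub^2 = xb^2 - 1" "uc^2 = xc^2 - 1"
    "xa > 1" "xb > 1" "xc > 1" "r > 0"
  shows "(ua * (2 * ua / (xa - 1) * (p + q)) - (xc + xa * xb) / ub * (2 * ub / (xb - 1) * (q + s))
          - (xb + xa * xc) / uc * (2 * uc / (xc - 1) * (s + p))) / r
       = dg (2 / r) xa xb xc * s + ofd (2 / r) xc xa xb * p + ofd (2 / r) xb xa xc * q"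
proof -
  have e1: "ua * (2 * ua / (xa - 1) * (p + q)) = 2 * (xa + 1) * (p + q)"
    using assms(4,7) by (simp add: field_simps power2_eq_square, algebra)
  have e2: "(xc + xa * xb) / ub * (2 * ub / (xb - 1) * (q + s)) = 2 * (xc + xa * xb) / (xb - 1) * (q + s)"
    using assms(2,8) by (simp add: field_simps)
  have e3: "(xb + xa * xc) / uc * (2 * uc / (xc - 1) * (s + p)) = 2 * (xb + xa * xc) / (xc - 1) * (s + p)"
    using assms(3,9) by (simp add: field_simps)
  have Z: "2 * (xa + 1) * (p + q) - 2 * (xc + xa * xb) / (xb - 1) * (q + s) - 2 * (xb + xa * xc) / (xc - 1) * (s + p)
     = dg 2 xa xb xc * s + ofd 2 xc xa xb * p + ofd 2 xb xa xc * q"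
  proof -
    have n: "xb - 1 \<noteq> 0" "xc - 1 \<noteq> 0" using assms(8,9) by auto
    have f1: "2 * (xa + 1) - 2 * (xb + xa * xc) / (xc - 1) = ofd 2 xc xa xb"
      unfolding ofd_def using n by (simp add: field_simps)
    have f2: "2 * (xa + 1) - 2 * (xc + xa * xb) / (xb - 1) = ofd 2 xb xa xc"
      unfolding ofd_def using n by (simp add: field_simps)
    have f3: "- (2 * (xc + xa * xb) / (xb - 1)) - 2 * (xb + xa * xc) / (xc - 1) = dg 2 xa xb xc"
      unfolding dg_def using n by (simp add: field_simps)
    have "2 * (xa + 1) * (p + q) - 2 * (xc + xa * xb) / (xb - 1) * (q + s) - 2 * (xb + xa * xc) / (xc - 1) * (s + p)
      = (2 * (xa + 1) - 2 * (xb + xa * xc) / (xc - 1)) * p + (2 * (xa + 1) - 2 * (xc + xa * xb) / (xb - 1)) * q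
        + (- (2 * (xc + xa * xb) / (xb - 1)) - 2 * (xb + xa * xc) / (xc - 1)) * s"
      by (simp add: algebra_simps add_divide_distrib)
    then show ?thesis unfolding f1 f2 f3 by simp
  qed
  have dgr: "dg (2 / r) x y z = dg 2 x y z / r" for x y z unfolding dg_def by (simp add: diff_divide_distrib add_divide_distrib)
  have ofr: "ofd (2 / r) x y z = ofd 2 x y z / r" for x y z unfolding ofd_def by simp
  show ?thesis unfolding e1 e2 e3 Z dgr ofr by (simp add: add_divide_distrib)
qed

lemma dom_alg:
  fixes K x y z :: real
  assumes "K > 0" "x > 1" "y > 1" "z > 1"
  shows "\<bar>dg K x y z\<bar> > \<bar>ofd K z x y\<bar> + \<bar>ofd K y x z\<bar>" and "dg K x y z < 0"
proof -
  have a1: "\<bar>z - x - y - 1\<bar> < y + x * z"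
  proof -
    have P1: "(x - 1) * (z + 1) > 0" "(x + 1) * (z - 1) > 0" using assms by (auto intro!: mult_pos_pos)
    have E1: "y + x * z - (z - x - y - 1) = (x - 1) * (z + 1) + 2 * y + 2" by (simp add: algebra_simps)
    have E2: "y + x * z + (z - x - y - 1) = (x + 1) * (z - 1)" by (simp add: algebra_simps)
    have "y + x * z - (z - x - y - 1) > 0" unfolding E1 using P1(1) assms by linarith
    moreover have "y + x * z + (z - x - y - 1) > 0" unfolding E2 using P1(2) by linarith
    ultimately show ?thesis unfolding abs_less_iff by linarith
  qed
  have a2: "\<bar>y - x - z - 1\<bar> < z + x * y"
  proof -
    have P1: "(x - 1) * (y + 1) > 0" "(x + 1) * (y - 1) > 0" using assms by (auto intro!: mult_pos_pos)
    have E1: "z + x * y - (y - x - z - 1) = (x - 1) * (y + 1) + 2 * z + 2" by (simp add: algebra_simps)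
    have E2: "z + x * y + (y - x - z - 1) = (x + 1) * (y - 1)" by (simp add: algebra_simps)
    have "z + x * y - (y - x - z - 1) > 0" unfolding E1 using P1(1) assms by linarith
    moreover have "z + x * y + (y - x - z - 1) > 0" unfolding E2 using P1(2) by linarith
    ultimately show ?thesis unfolding abs_less_iff by linarith
  qed
  have p1: "(z + x * y) / (y - 1) > 0" "(y + x * z) / (z - 1) > 0"
    using assms by (simp_all add: add_pos_pos)
  have "dg K x y z = - K * ((z + x * y) / (y - 1) + (y + x * z) / (z - 1))" by (simp add: dg_def)
  then show neg: "dg K x y z < 0" using p1 assms(1) by simp
  have o1: "\<bar>ofd K z x y\<bar> = K * (\<bar>z - x - y - 1\<bar> / (z - 1))"
    unfolding ofd_def using assms by (simp add: abs_mult abs_divide)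
  have o2: "\<bar>ofd K y x z\<bar> = K * (\<bar>y - x - z - 1\<bar> / (y - 1))"
    unfolding ofd_def using assms by (simp add: abs_mult abs_divide)
  have d: "\<bar>dg K x y z\<bar> = K * ((z + x * y) / (y - 1) + (y + x * z) / (z - 1))"
    using neg unfolding dg_def by simp
  have "\<bar>z - x - y - 1\<bar> / (z - 1) < (y + x * z) / (z - 1)"
    using a1 assms by (simp add: divide_strict_right_mono)
  moreover have "\<bar>y - x - z - 1\<bar> / (y - 1) < (z + x * y) / (y - 1)"
    using a2 assms by (simp add: divide_strict_right_mono)
  ultimately have "\<bar>z - x - y - 1\<bar> / (z - 1) + \<bar>y - x - z - 1\<bar> / (y - 1)
     < (z + x * y) / (y - 1) + (y + x * z) / (z - 1)" by linarith
  then have "K * (\<bar>z - x - y - 1\<bar> / (z - 1) + \<bar>y - x - z - 1\<bar> / (y - 1))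
     < K * ((z + x * y) / (y - 1) + (y + x * z) / (z - 1))" by (rule mult_strict_left_mono) (rule assms(1))
  then show "\<bar>dg K x y z\<bar> > \<bar>ofd K z x y\<bar> + \<bar>ofd K y x z\<bar>"
    unfolding o1 o2 d by (simp only: distrib_left)
qed

lemma quad_neg:
  fixes d1 d2 d3 e12 e13 e23 x y z :: real
  assumes "d1 + \<bar>e12\<bar> + \<bar>e13\<bar> < 0" "d2 + \<bar>e12\<bar> + \<bar>e23\<bar> < 0" "d3 + \<bar>e13\<bar> + \<bar>e23\<bar> < 0"
    and "x \<noteq> 0 \<or> y \<noteq> 0 \<or> z \<noteq> 0"
  shows "x * (d1 * x + e12 * y + e13 * z) + y * (e12 * x + d2 * y + e23 * z) + z * (e13 * x + e23 * y + d3 * z) < 0"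
proof -
  have b: "2 * (e * u * v) \<le> \<bar>e\<bar> * (u^2 + v^2)" for e u v :: real
  proof -
    have h2: "(\<bar>u\<bar> - \<bar>v\<bar>)^2 = u^2 + v^2 - 2 * \<bar>u * v\<bar>"
      by (simp add: power2_eq_square abs_mult algebra_simps abs_mult_self_eq)
    have "(\<bar>u\<bar> - \<bar>v\<bar>)^2 \<ge> 0" by simp
    hence uv: "2 * \<bar>u * v\<bar> \<le> u^2 + v^2" unfolding h2 by simp
    have "2 * (e * u * v) \<le> \<bar>e\<bar> * (2 * \<bar>u * v\<bar>)"
      using abs_ge_self[of "e * u * v"] by (simp add: abs_mult)
    also have "\<dots> \<le> \<bar>e\<bar> * (u^2 + v^2)" using uv by (rule mult_left_mono) simp
    finally show ?thesis .
  qed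
  have "x * (d1 * x + e12 * y + e13 * z) + y * (e12 * x + d2 * y + e23 * z) + z * (e13 * x + e23 * y + d3 * z)
     = d1 * x^2 + d2 * y^2 + d3 * z^2 + 2 * (e12 * x * y) + 2 * (e13 * x * z) + 2 * (e23 * y * z)"
    by (simp add: algebra_simps power2_eq_square)
  also have "\<dots> \<le> x^2 * (d1 + \<bar>e12\<bar> + \<bar>e13\<bar>) + y^2 * (d2 + \<bar>e12\<bar> + \<bar>e23\<bar>) + z^2 * (d3 + \<bar>e13\<bar> + \<bar>e23\<bar>)"
    using b[of e12 x y] b[of e13 x z] b[of e23 y z] by (simp add: algebra_simps)
  also have "\<dots> < 0"
  proof -
    have "x^2 * (d1 + \<bar>e12\<bar> + \<bar>e13\<bar>) \<le> 0" "y^2 * (d2 + \<bar>e12\<bar> + \<bar>e23\<bar>) \<le> 0"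
         "z^2 * (d3 + \<bar>e13\<bar> + \<bar>e23\<bar>) \<le> 0"
      using assms(1-3) by (simp_all add: mult_nonneg_nonpos)
    moreover have "x^2 * (d1 + \<bar>e12\<bar> + \<bar>e13\<bar>) < 0 \<or> y^2 * (d2 + \<bar>e12\<bar> + \<bar>e23\<bar>) < 0
         \<or> z^2 * (d3 + \<bar>e13\<bar> + \<bar>e23\<bar>) < 0"
      using assms by (auto simp: mult_pos_neg)
    ultimately show ?thesis by linarith
  qed
  finally show ?thesis .
qed

lemma vec_deriv:
  fixes f :: "real^'m \<Rightarrow> real^'n"
  assumes "\<And>k. ((\<lambda>x. f x $ k) has_derivative (\<lambda>h. f' h $ k)) (at w)"
  shows "(f has_derivative f') (at w)"
  apply (subst has_derivative_componentwise_within)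
  using assms by (auto simp: Basis_vec_def inner_axis)

lemma ylem:
  fixes s C :: real
  assumes "s > - ln C" "C > 0"
  shows "exp s * C > 1"
proof -
  have "exp s > exp (- ln C)" using assms(1) by simp
  also have "exp (- ln C) = 1 / C" using assms(2) by (simp add: exp_minus inverse_eq_divide)
  finally show ?thesis using assms(2) by (simp add: divide_less_eq mult.commute)
qed

lemma Dl_pos:
  fixes x y z :: real
  assumes "x > 1" "y > 1" "z > 1"
  shows "Dl x y z > 0"
proof -
  have "x^2 > 1" using assms(1) by (simp add: one_less_power)
  moreover have "x * y * z > 0" using assms by simp
  moreover have "y^2 \<ge> 0" "z^2 \<ge> 0" by simp_all
  ultimately show ?thesis unfolding Dl_def by linarith
qed

lemma edge_pos:
  assumes "exp (x + y) * cosh (l0/2) > 1"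
  shows "edge_len l0 x y > 0" "cosh (edge_len l0 x y) > 1" "sinh (edge_len l0 x y) > 0"
    "sinh (edge_len l0 x y) ^ 2 = cosh (edge_len l0 x y) ^ 2 - 1"
proof -
  show p: "edge_len l0 x y > 0" unfolding edge_len_def using edge_facts(2)[OF assms] .
  then show "cosh (edge_len l0 x y) > 1"
    by (smt (verit) cosh_real_nonneg_less_iff cosh_0)
  show "sinh (edge_len l0 x y) > 0" using p by simp
  show "sinh (edge_len l0 x y) ^ 2 = cosh (edge_len l0 x y) ^ 2 - 1" by (rule sinh_square_eq)
qed


lemma n3: "(1::3) \<noteq> 2" "(1::3) \<noteq> 3" "(2::3) \<noteq> 3" "(2::3) \<noteq> 1" "(3::3) \<noteq> 1" "(3::3) \<noteq> 2" by simp_all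

theorem lemma2p2:
  fixes l0ij l0jk l0ki :: real and w :: "real ^ 3"
  assumes "l0ij > 0" and "l0jk > 0" and "l0ki > 0"
    and "w \<in> W_dia l0ij l0jk l0ki"
  shows "\<exists>J :: real ^ 3 ^ 3.
           (theta_map l0ij l0jk l0ki has_derivative (\<lambda>h. J *v h)) (at w) \<and>
           transpose J = J \<and>
           (\<forall>r. \<bar>J $ r $ r\<bar> > (\<Sum>s\<in>UNIV - {r}. \<bar>J $ r $ s\<bar>)) \<and>
           (\<forall>h. h \<noteq> 0 \<longrightarrow> h \<bullet> (J *v h) < 0)"
proof -
  have yij: "exp (w$1 + w$2) * cosh (l0ij/2) > 1"
    using assms(4) unfolding W_dia_def by (intro ylem) auto
  have yjk: "exp (w$2 + w$3) * cosh (l0jk/2) > 1"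
    using assms(4) unfolding W_dia_def by (intro ylem) auto
  have yki: "exp (w$3 + w$1) * cosh (l0ki/2) > 1"
    using assms(4) unfolding W_dia_def by (intro ylem) auto
  define a where "a = edge_len l0jk (w$2) (w$3)"
  define b where "b = edge_len l0ki (w$3) (w$1)"
  define c where "c = edge_len l0ij (w$1) (w$2)"
  note pa = edge_pos[OF yjk, folded a_def]
  note pb = edge_pos[OF yki, folded b_def]
  note pc = edge_pos[OF yij, folded c_def]
  define ca where "ca = cosh a"
  define cb where "cb = cosh b"
  define cc where "cc = cosh c"
  define r where "r = sqrt (Dl ca cb cc)"
  define K where "K = 2 / r"
  have Dp: "Dl ca cb cc > 0" using Dl_pos pa(2) pb(2) pc(2) unfolding ca_def cb_def cc_def by blast
  have rp: "r > 0" unfolding r_def using Dp by simp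
  have Kp: "K > 0" unfolding K_def using rp by simp
  have D2: "Dl cb cc ca = Dl ca cb cc" and D3: "Dl cc ca cb = Dl ca cb cc" unfolding Dl_def by (simp_all add: algebra_simps)
  define J :: "real^3^3" where "J = (\<chi> i j. if i = 1 then (if j = 1 then dg K ca cb cc else if j = 2 then ofd K cc ca cb else ofd K cb ca cc)
      else if i = 2 then (if j = 1 then ofd K cc cb ca else if j = 2 then dg K cb cc ca else ofd K ca cb cc)
      else (if j = 1 then ofd K cb cc ca else if j = 2 then ofd K ca cc cb else dg K cc ca cb))"
  have J1: "J$1$1 = dg K ca cb cc" "J$1$2 = ofd K cc ca cb" "J$1$3 = ofd K cb ca cc"
    and J2: "J$2$1 = ofd K cc cb ca" "J$2$2 = dg K cb cc ca" "J$2$3 = ofd K ca cb cc"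
    and J3: "J$3$1 = ofd K cb cc ca" "J$3$2 = ofd K ca cc cb" "J$3$3 = dg K cc ca cb"
    unfolding J_def by simp_all
  have Ea: "((\<lambda>x. edge_len l0jk (x$2) (x$3)) has_derivative (\<lambda>h. (2 * sinh a / (cosh a - 1)) * (h$2 + h$3))) (at w)"
    using edge_deriv[OF yjk] unfolding a_def .
  have Eb: "((\<lambda>x. edge_len l0ki (x$3) (x$1)) has_derivative (\<lambda>h. (2 * sinh b / (cosh b - 1)) * (h$3 + h$1))) (at w)"
    using edge_deriv[OF yki] unfolding b_def .
  have Ec: "((\<lambda>x. edge_len l0ij (x$1) (x$2)) has_derivative (\<lambda>h. (2 * sinh c / (cosh c - 1)) * (h$1 + h$2))) (at w)"
    using edge_deriv[OF yij] unfolding c_def .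
  have mv: "(J *v h) $ i = J$i$1 * h$1 + J$i$2 * h$2 + J$i$3 * h$3" for h i
    by (simp add: matrix_vector_mult_def sum_3)
  have T1: "((\<lambda>x. theta_map l0ij l0jk l0ki x $ 1) has_derivative (\<lambda>h. (J *v h) $ 1)) (at w)"
  proof -
    have fe: "(\<lambda>x. theta_map l0ij l0jk l0ki x $ 1) = (\<lambda>x. hex_opp (edge_len l0jk (x$2) (x$3)) (edge_len l0ki (x$3) (x$1)) (edge_len l0ij (x$1) (x$2)))"
      by (simp add: theta_map_def Let_def fun_eq_iff)
    note H = hex_deriv[OF Ea Eb Ec, folded a_def b_def c_def, OF pa(1) pb(1) pc(1)]
    have rp': "sqrt (Dl (cosh a) (cosh b) (cosh c)) > 0" using Dp unfolding ca_def cb_def cc_def by simp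
    show ?thesis unfolding fe
      apply (rule has_derivative_eq_rhs[OF H])
      apply (rule ext)
      subgoal for h
        using comp_alg[OF pa(3) pb(3) pc(3) pa(4) pb(4) pc(4) pa(2) pb(2) pc(2) rp', of "h$2" "h$3" "h$1"]
        unfolding mv J1 K_def r_def ca_def cb_def cc_def by (simp only: add_ac)
      done
  qed
  have T2: "((\<lambda>x. theta_map l0ij l0jk l0ki x $ 2) has_derivative (\<lambda>h. (J *v h) $ 2)) (at w)"
  proof -
    have fe: "(\<lambda>x. theta_map l0ij l0jk l0ki x $ 2) = (\<lambda>x. hex_opp (edge_len l0ki (x$3) (x$1)) (edge_len l0ij (x$1) (x$2)) (edge_len l0jk (x$2) (x$3)))"
      by (simp add: theta_map_def Let_def fun_eq_iff)
    have Dp1: "Dl (cosh b) (cosh c) (cosh a) = Dl (cosh a) (cosh b) (cosh c)" unfolding Dl_def by (simp add: algebra_simps)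
    note H0 = hex_deriv[OF Eb Ec Ea, folded a_def b_def c_def, OF pb(1) pc(1) pa(1)]
    note H = H0[unfolded Dp1]
    have rp': "sqrt (Dl (cosh a) (cosh b) (cosh c)) > 0" using Dp unfolding ca_def cb_def cc_def by simp
    show ?thesis unfolding fe
      apply (rule has_derivative_eq_rhs[OF H])
      apply (rule ext)
      subgoal for h
        using comp_alg[OF pb(3) pc(3) pa(3) pb(4) pc(4) pa(4) pb(2) pc(2) pa(2) rp', of "h$3" "h$1" "h$2"]
        unfolding mv J2 K_def r_def ca_def cb_def cc_def by (simp only: add_ac)
      done
  qed
  have T3: "((\<lambda>x. theta_map l0ij l0jk l0ki x $ 3) has_derivative (\<lambda>h. (J *v h) $ 3)) (at w)"
  proof -
    have fe: "(\<lambda>x. theta_map l0ij l0jk l0ki x $ 3) = (\<lambda>x. hex_opp (edge_len l0ij (x$1) (x$2)) (edge_len l0jk (x$2) (x$3)) (edge_len l0ki (x$3) (x$1)))"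
      by (simp add: theta_map_def Let_def fun_eq_iff)
    have Dp1: "Dl (cosh c) (cosh a) (cosh b) = Dl (cosh a) (cosh b) (cosh c)" unfolding Dl_def by (simp add: algebra_simps)
    note H0 = hex_deriv[OF Ec Ea Eb, folded a_def b_def c_def, OF pc(1) pa(1) pb(1)]
    note H = H0[unfolded Dp1]
    have rp': "sqrt (Dl (cosh a) (cosh b) (cosh c)) > 0" using Dp unfolding ca_def cb_def cc_def by simp
    show ?thesis unfolding fe
      apply (rule has_derivative_eq_rhs[OF H])
      apply (rule ext)
      subgoal for h
        using comp_alg[OF pc(3) pa(3) pb(3) pc(4) pa(4) pb(4) pc(2) pa(2) pb(2) rp', of "h$1" "h$2" "h$3"]
        unfolding mv J3 K_def r_def ca_def cb_def cc_def by (simp only: add_ac)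
      done
  qed
  have deriv: "(theta_map l0ij l0jk l0ki has_derivative (\<lambda>h. J *v h)) (at w)"
  proof (rule vec_deriv)
    fix k :: 3
    show "((\<lambda>x. theta_map l0ij l0jk l0ki x $ k) has_derivative (\<lambda>h. (J *v h) $ k)) (at w)"
      using T1 T2 T3 exhaust_3[of k] by auto
  qed
  have s21: "ofd K cc cb ca = ofd K cc ca cb" and s31: "ofd K cb cc ca = ofd K cb ca cc"
    and s32: "ofd K ca cc cb = ofd K ca cb cc" by (rule ofd_sym)+
  have sym: "transpose J = J"
    unfolding vec_eq_iff transpose_def forall_3 using J1 J2 J3 s21 s31 s32 by simp
  have c1: "ca > 1" "cb > 1" "cc > 1" using pa(2) pb(2) pc(2) unfolding ca_def cb_def cc_def by simp_all
  note d1 = dom_alg[OF Kp c1(1) c1(2) c1(3)]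
  note d2 = dom_alg[OF Kp c1(2) c1(3) c1(1)]
  note d3 = dom_alg[OF Kp c1(3) c1(1) c1(2)]
  have U1: "UNIV - {1::3} = {2, 3}" and U2: "UNIV - {2::3} = {1, 3}" and U3: "UNIV - {3::3} = {1, 2}"
    unfolding UNIV_3 using n3 by auto
  have dom: "\<forall>r. \<bar>J $ r $ r\<bar> > (\<Sum>s\<in>UNIV - {r}. \<bar>J $ r $ s\<bar>)"
    unfolding forall_3 U1 U2 U3 using J1 J2 J3 d1(1) d2(1) d3(1) by (simp add: add.commute)
  have neg: "\<forall>h. h \<noteq> 0 \<longrightarrow> h \<bullet> (J *v h) < 0"
  proof (intro allI impI)
    fix h :: "real^3"
    assume "h \<noteq> 0"
    then have nz: "h$1 \<noteq> 0 \<or> h$2 \<noteq> 0 \<or> h$3 \<noteq> 0" by (auto simp: vec_eq_iff forall_3)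
    have e: "h \<bullet> (J *v h) = h$1 * (J$1$1 * h$1 + J$1$2 * h$2 + J$1$3 * h$3) + h$2 * (J$2$1 * h$1 + J$2$2 * h$2 + J$2$3 * h$3)
       + h$3 * (J$3$1 * h$1 + J$3$2 * h$2 + J$3$3 * h$3)"
      by (simp add: inner_vec_def sum_3 mv)
    show "h \<bullet> (J *v h) < 0" unfolding e J1 J2 J3 s21 s31 s32
      apply (rule quad_neg[OF _ _ _ nz])
      using d1 abs_of_neg[OF d1(2)] apply linarith
      using d2[unfolded s21] abs_of_neg[OF d2(2)] apply linarith
      using d3[unfolded s31 s32] abs_of_neg[OF d3(2)] by linarith
  qed
  show ?thesis using deriv sym dom neg by blast
qed
end
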